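(* Let $0<\sigma<\infty$, let $f$ be an exposed point of $D(B^1_\sigma)$ with exposing functional $\Phi_f(g)=\int_{\mathbb{R}}g(x)\,\overline{f(x)}/|f(x)|\,dx$. Let $f_n\in D(B^1_\sigma)$, $n\in\mathbb{N}$, with $\lim_{n\to\infty}\Phi_f(f_n)=1$. If $(f_n)$ converges uniformly on compact subsets of $\mathbb{R}$ to some $f_0\in D(B^1_\sigma)$, then there exists $\alpha$ with $0\le\alpha\le1$ such that $f_0=\alpha f$.
   Context: For $0<\sigma<\infty$, $B^1_\sigma$ is the space of $f\in L^1(\mathbb{R})$ whose Fourier transform is supported in $[-\sigma,\sigma]$, with the $L^1(\mathbb{R})$ norm; its elements are continuous (indeed entire) functions. $D(B^1_\sigma)$ is its closed unit ball. A point $f\in D(B^1_\sigma)$ is exposed if there is a continuous linear functional $\Phi$ on $B^1_\sigma$ with $\Phi(f)=\|\Phi\|=1$ and $\mathrm{Re}\,\Phi(g)<1$ for all $g\in D(B^1_\sigma)$, $g\ne f$; this functional is unique and equals $g\mapsto\int_{\mathbb{R}}g(x)\overline{f(x)}/|f(x)|\,dx$ (the integrand defined almost everywhere). *)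

theory Defs
  imports "HOL-Analysis.Analysis"
begin

definition fourier :: "(real \<Rightarrow> complex) \<Rightarrow> real \<Rightarrow> complex" where
  "fourier f \<xi> = (LINT x|lborel. f x * exp (- (\<i> * complex_of_real (x * \<xi>))))"

definition L1norm :: "(real \<Rightarrow> complex) \<Rightarrow> real" where
  "L1norm f = (LINT x|lborel. cmod (f x))"

text \<open>The space B^1_sigma, elements represented by their continuous representative.\<close>
definition B1 :: "real \<Rightarrow> (real \<Rightarrow> complex) set" where
  "B1 \<sigma> = {f. continuous_on UNIV f \<and> integrable lborel f \<and>
                (\<forall>\<xi>. \<bar>\<xi>\<bar> > \<sigma> \<longrightarrow> fourier f \<xi> = 0)}"

definition DB1 :: "real \<Rightarrow> (real \<Rightarrow> complex) set" where
  "DB1 \<sigma> = {f \<in> B1 \<sigma>. L1norm f \<le> 1}"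

definition clin_functional_on_B1 :: "real \<Rightarrow> ((real \<Rightarrow> complex) \<Rightarrow> complex) \<Rightarrow> bool" where
  "clin_functional_on_B1 \<sigma> \<Phi> \<longleftrightarrow>
     (\<forall>g\<in>B1 \<sigma>. \<forall>h\<in>B1 \<sigma>. \<Phi> (\<lambda>x. g x + h x) = \<Phi> g + \<Phi> h) \<and>
     (\<forall>g\<in>B1 \<sigma>. \<forall>c::complex. \<Phi> (\<lambda>x. c * g x) = c * \<Phi> g) \<and>
     (\<exists>C. \<forall>g\<in>B1 \<sigma>. cmod (\<Phi> g) \<le> C * L1norm g)"

text \<open>Given Phi f = 1 and norm f \<le> 1,
  norm Phi = 1 amounts to norm Phi \<le> 1, i.e. cmod (Phi g) \<le> L1norm g.\<close>
definition exposed_point :: "real \<Rightarrow> (real \<Rightarrow> complex) \<Rightarrow> bool" where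
  "exposed_point \<sigma> f \<longleftrightarrow> f \<in> DB1 \<sigma> \<and>
     (\<exists>\<Phi>. clin_functional_on_B1 \<sigma> \<Phi> \<and>
          (\<forall>g\<in>B1 \<sigma>. cmod (\<Phi> g) \<le> L1norm g) \<and>
          \<Phi> f = 1 \<and>
          (\<forall>g\<in>DB1 \<sigma>. g \<noteq> f \<longrightarrow> Re (\<Phi> g) < 1))"

definition Phi :: "(real \<Rightarrow> complex) \<Rightarrow> (real \<Rightarrow> complex) \<Rightarrow> complex" where
  "Phi f g = (LINT x|lborel. g x * cnj (f x) / complex_of_real (cmod (f x)))"

end

theory Submission
  imports Defs
begin

lemma meas_cont: "continuous_on UNIV (g::real\<Rightarrow>complex) \<Longrightarrow> g \<in> borel_measurable lborel"
  using borel_measurable_continuous_onI by (simp add: measurable_lborel1)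

lemma fourier_integrable:
  assumes "continuous_on UNIV g" "integrable lborel g"
  shows "integrable lborel (\<lambda>x. g x * exp (- (\<i> * complex_of_real (x * \<xi>))))"
proof (rule Bochner_Integration.integrable_bound[OF assms(2)])
  show "(\<lambda>x. g x * exp (- (\<i> * complex_of_real (x * \<xi>)))) \<in> borel_measurable lborel"
    by (rule meas_cont) (intro continuous_intros assms(1))
  show "AE x in lborel. norm (g x * exp (- (\<i> * complex_of_real (x * \<xi>)))) \<le> norm (g x)"
    by (simp add: norm_mult)
qed

lemma B1_scale: "g \<in> B1 \<sigma> \<Longrightarrow> (\<lambda>x. c * g x) \<in> B1 \<sigma>"
  unfolding B1_def fourier_def
  by (auto intro!: continuous_intros simp: mult.assoc)

lemma B1_add: assumes "g \<in> B1 \<sigma>" "h \<in> B1 \<sigma>" shows "(\<lambda>x. g x + h x) \<in> B1 \<sigma>"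
proof -
  have *: "fourier (\<lambda>x. g x + h x) \<xi> = fourier g \<xi> + fourier h \<xi>" for \<xi>
    unfolding fourier_def distrib_right
    using assms fourier_integrable unfolding B1_def by (intro Bochner_Integration.integral_add) auto
  show ?thesis using assms unfolding B1_def by (auto intro!: continuous_intros simp: *)
qed

lemma cont_AE_zero:
  assumes "continuous_on UNIV (g::real\<Rightarrow>complex)" "AE x in lborel. g x = 0"
  shows "g = (\<lambda>x. 0)"
proof (rule ccontr)
  assume "g \<noteq> (\<lambda>x. 0)"
  then obtain x where x: "g x \<noteq> 0" by auto
  have "open {y. g y \<noteq> 0}" by (rule open_Collect_neq[OF assms(1)]) (auto intro: continuous_intros)
  then obtain e where e: "e > 0" "ball x e \<subseteq> {y. g y \<noteq> 0}" using x by (auto simp: open_contains_ball)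
  from assms(2) obtain N where N: "{y \<in> space lborel. \<not> g y = 0} \<subseteq> N" "emeasure lborel N = 0" "N \<in> sets lborel"
    by (auto elim: AE_E)
  have "ball x e \<subseteq> N" using e N by auto
  then have "emeasure lborel (ball x e) \<le> 0" using N emeasure_mono by (metis sets_lborel)
  moreover have "emeasure lborel (ball x e) = ennreal (2*e)" using e by (simp add: ball_eq_greaterThanLessThan)
  ultimately show False using e by simp
qed
lemma pw_align:
  fixes z y :: complex
  assumes h: "cmod z = Re (z * (cnj y / complex_of_real (cmod y)))"
  shows "z = complex_of_real (cmod z / cmod y) * y"
proof (cases "y = 0")
  case True then show ?thesis using h by simp
next
  case False
  define u where "u = z * (cnj y / complex_of_real (cmod y))"
  have nu: "cmod u = cmod z" using False by (simp add: u_def norm_mult norm_divide)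
  have "(cmod u)^2 = (Re u)^2 + (Im u)^2" by (rule cmod_power2)
  then have "Im u = 0" using h nu u_def by simp
  then have uu: "u = complex_of_real (cmod z)" using h nu u_def by (simp add: complex_eq_iff)
  have cy: "cnj y * y = complex_of_real ((cmod y)^2)" by (subst mult.commute) (rule complex_norm_square[symmetric])
  have "u * y = z * (cnj y * y) / complex_of_real (cmod y)" by (simp add: u_def)
  also have "\<dots> = z * complex_of_real (cmod y)" using False by (simp add: cy power2_eq_square)
  finally have "complex_of_real (cmod z) * y = z * complex_of_real (cmod y)" using uu by simp
  then show ?thesis using False
    by (metis (no_types, lifting) divide_eq_eq mult.commute norm_eq_zero of_real_divide of_real_eq_0_iff times_divide_eq_left)
qed

lemma pw_norm:
  fixes F G :: complex and t :: real
  assumes h: "G = complex_of_real (cmod G / cmod F) * F" and t: "t \<ge> 0"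
  shows "cmod (F + (- complex_of_real t) * G) = cmod F - t * cmod G + 2 * max 0 (t * cmod G - cmod F)"
proof (cases "F = 0")
  case True then have "G = 0" using h by simp
  then show ?thesis using True by simp
next
  case False
  define l where "l = cmod G / cmod F"
  have "F + (- complex_of_real t) * G = complex_of_real (1 - t * l) * F"
    by (subst h) (simp add: l_def algebra_simps)
  then have "cmod (F + (- complex_of_real t) * G) = \<bar>1 - t * l\<bar> * cmod F" by (simp only: norm_mult norm_of_real)
  also have "\<dots> = \<bar>(1 - t * l) * cmod F\<bar>" by (simp add: abs_mult)
  also have "(1 - t * l) * cmod F = cmod F - t * cmod G" using False by (simp add: l_def field_simps)
  finally show ?thesis by (simp add: abs_if max_def)
qed
theorem lemma4p5:
  fixes \<sigma> :: real and f f0 :: "real \<Rightarrow> complex" and fn :: "nat \<Rightarrow> real \<Rightarrow> complex"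
  assumes "0 < \<sigma>"
    and "exposed_point \<sigma> f"
    and "\<And>n. fn n \<in> DB1 \<sigma>"
    and "(\<lambda>n. Phi f (fn n)) \<longlonglongrightarrow> 1"
    and "f0 \<in> DB1 \<sigma>"
    and "\<And>K. compact K \<Longrightarrow> uniform_limit K fn f0 sequentially"
  shows "\<exists>\<alpha>::real. 0 \<le> \<alpha> \<and> \<alpha> \<le> 1 \<and> f0 = (\<lambda>x. complex_of_real \<alpha> * f x)"
proof -
  note expo = assms(2)[unfolded exposed_point_def]
  have fB1: "f \<in> B1 \<sigma>" and fle: "L1norm f \<le> 1" using expo by (auto simp: DB1_def)
  obtain \<Phi> where clin: "clin_functional_on_B1 \<sigma> \<Phi>"
    and bnd: "\<And>g. g \<in> B1 \<sigma> \<Longrightarrow> cmod (\<Phi> g) \<le> L1norm g"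
    and \<Phi>f: "\<Phi> f = 1" and exp1: "\<And>g. g \<in> DB1 \<sigma> \<Longrightarrow> g \<noteq> f \<Longrightarrow> Re (\<Phi> g) < 1"
    using expo by blast
  have add\<Phi>: "\<And>g h. g \<in> B1 \<sigma> \<Longrightarrow> h \<in> B1 \<sigma> \<Longrightarrow> \<Phi> (\<lambda>x. g x + h x) = \<Phi> g + \<Phi> h"
    and scl\<Phi>: "\<And>g c. g \<in> B1 \<sigma> \<Longrightarrow> \<Phi> (\<lambda>x. c * g x) = c * \<Phi> g"
    using clin unfolding clin_functional_on_B1_def by blast+
  have f1: "L1norm f = 1" using bnd[OF fB1] \<Phi>f fle by simp
  have fc: "continuous_on UNIV f" and fi: "integrable lborel f" using fB1 by (auto simp: B1_def)
  have f0B1: "f0 \<in> B1 \<sigma>" and f0le: "L1norm f0 \<le> 1" using assms(5) by (auto simp: DB1_def)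
  have f0c: "continuous_on UNIV f0" and f0i: "integrable lborel f0" using f0B1 by (auto simp: B1_def)
  have fm[measurable]: "f \<in> borel_measurable lborel" using meas_cont[OF fc] .
  have f0m[measurable]: "f0 \<in> borel_measurable lborel" using meas_cont[OF f0c] .
  define q where "q x = cnj (f x) / complex_of_real (cmod (f x))" for x
  have cnjm[measurable]: "(\<lambda>x. cnj (f x)) \<in> borel_measurable lborel"
    by (rule meas_cont) (intro continuous_intros fc)
  have cmm[measurable]: "(\<lambda>x. complex_of_real (cmod (f x))) \<in> borel_measurable lborel"
    by (rule meas_cont) (intro continuous_intros fc)
  have qm[measurable]: "q \<in> borel_measurable lborel" unfolding q_def[abs_def] by measurable
  have qn: "cmod (q x) \<le> 1" for x
    by (cases "f x = 0") (auto simp: q_def norm_divide)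
  define w where "w u x = cmod (u x) - Re (u x * q x)" for u :: "real \<Rightarrow> complex" and x
  have w_nonneg: "0 \<le> w u x" for u x
  proof -
    have "Re (u x * q x) \<le> cmod (u x * q x)" by (rule complex_Re_le_cmod)
    also have "\<dots> \<le> cmod (u x)" using qn[of x] by (simp add: norm_mult mult_left_le)
    finally show ?thesis by (simp add: w_def)
  qed
  have w_lip: "w a x \<le> w b x + 2 * cmod (a x - b x)" for a b x
  proof -
    have "cmod (a x) \<le> cmod (b x) + cmod (a x - b x)" by (metis norm_triangle_sub add.commute)
    moreover have "\<bar>Re ((a x - b x) * q x)\<bar> \<le> cmod (a x - b x)"
      using abs_Re_le_cmod[of "(a x - b x) * q x"] qn[of x]
      by (smt (verit) mult_left_le norm_ge_zero norm_mult)
    ultimately show ?thesis by (simp add: w_def algebra_simps)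
  qed
  have int_uq: "integrable lborel (\<lambda>x. u x * q x)" if "u \<in> B1 \<sigma>" for u
  proof -
    have uc: "continuous_on UNIV u" and ui: "integrable lborel u" using that by (auto simp: B1_def)
    have [measurable]: "u \<in> borel_measurable lborel" using meas_cont[OF uc] .
    show ?thesis
      by (rule Bochner_Integration.integrable_bound[OF ui]) (auto simp: norm_mult intro!: mult_left_le qn)
  qed
  have int_w: "integrable lborel (w u)" if "u \<in> B1 \<sigma>" for u
  proof -
    have ui: "integrable lborel u" using that by (auto simp: B1_def)
    show ?thesis unfolding w_def[abs_def]
      by (rule Bochner_Integration.integrable_diff[OF integrable_norm[OF ui] integrable_Re[OF int_uq[OF that]]])
  qed
  have int_w_eq: "integral\<^sup>L lborel (w u) = L1norm u - Re (Phi f u)" if "u \<in> B1 \<sigma>" for u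
  proof -
    have ui: "integrable lborel u" using that by (auto simp: B1_def)
    have phi: "Phi f u = integral\<^sup>L lborel (\<lambda>x. u x * q x)" by (simp add: Phi_def q_def)
    have reint: "integral\<^sup>L lborel (\<lambda>x. Re (u x * q x)) = Re (integral\<^sup>L lborel (\<lambda>x. u x * q x))"
      by (rule integral_bounded_linear[OF bounded_linear_Re int_uq[OF that]])
    have eq: "integral\<^sup>L lborel (w u) = integral\<^sup>L lborel (\<lambda>x. cmod (u x)) - integral\<^sup>L lborel (\<lambda>x. Re (u x * q x))"
      unfolding w_def[abs_def]
      by (rule Bochner_Integration.integral_diff[OF integrable_norm[OF ui] integrable_Re[OF int_uq[OF that]]])
    show ?thesis by (simp only: eq reint phi L1norm_def)
  qed
  have fnB1: "fn n \<in> B1 \<sigma>" and fnle: "L1norm (fn n) \<le> 1" for n using assms(3)[of n] by (auto simp: DB1_def)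
  have ReLim: "(\<lambda>n. Re (Phi f (fn n))) \<longlonglongrightarrow> 1"
    using tendsto_Re[OF assms(4)] by simp
  have stepA: "integral\<^sup>L lborel (\<lambda>x. w f0 x * indicator {- real R..real R} x) \<le> 0" for R :: nat
  proof -
    define K where "K = {- real R..real R}"
    define I where "I = integral\<^sup>L lborel (\<lambda>x. w f0 x * indicator K x)"
    have Ibound: "I \<le> e * (1 + 4 * real R)" if e: "e > 0" for e
    proof -
      have "compact K" by (simp add: K_def)
      from uniform_limitD[OF assms(6)[OF this] e]
      have ev1: "\<forall>\<^sub>F n in sequentially. \<forall>x\<in>K. dist (fn n x) (f0 x) < e" .
      have ev2: "\<forall>\<^sub>F n in sequentially. 1 - e < Re (Phi f (fn n))"
        using order_tendstoD(1)[OF ReLim, of "1 - e"] e by simp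
      obtain n where n1: "\<forall>x\<in>K. dist (fn n x) (f0 x) < e" and n2: "1 - e < Re (Phi f (fn n))"
        using eventually_happens'[OF _ eventually_conj[OF ev1 ev2]] by auto
      have pw: "w f0 x * indicator K x \<le> w (fn n) x + 2 * e * indicator K x" for x
      proof (cases "x \<in> K")
        case True
        have "w f0 x \<le> w (fn n) x + 2 * cmod (f0 x - fn n x)" by (rule w_lip)
        also have "cmod (f0 x - fn n x) < e" using n1 True by (simp add: dist_norm norm_minus_commute)
        finally show ?thesis using True by simp
      next
        case False then show ?thesis using w_nonneg by simp
      qed
      have intK: "integrable lborel (indicator K :: real \<Rightarrow> real)"
        by (simp add: K_def integrable_indicator_iff)
      have "I \<le> integral\<^sup>L lborel (\<lambda>x. w (fn n) x + 2 * e * indicator K x)"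
        unfolding I_def
        by (intro Bochner_Integration.integral_mono integrable_real_mult_indicator int_w f0B1 fnB1
             Bochner_Integration.integrable_add integrable_mult_right intK pw) (auto simp: K_def)
      also have "\<dots> = integral\<^sup>L lborel (w (fn n)) + 2 * e * measure lborel K"
        using int_w[OF fnB1] intK by (subst Bochner_Integration.integral_add) auto
      also have "measure lborel K = 2 * real R" by (simp add: K_def)
      also have "integral\<^sup>L lborel (w (fn n)) \<le> 1 - Re (Phi f (fn n))"
        using int_w_eq[OF fnB1] fnle[of n] by simp
      finally show ?thesis using n2 by (simp add: algebra_simps)
    qed
    have "I \<le> 0"
    proof (rule ccontr)
      assume "\<not> I \<le> 0"
      then have "I > 0" by simp
      have c: "1 + 4 * real R > 0" by simp
      have "I \<le> (I / (2 * (1 + 4 * real R))) * (1 + 4 * real R)"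
        using Ibound[of "I / (2 * (1 + 4 * real R))"] \<open>I > 0\<close> c by simp
      also have "\<dots> = I / 2" using c by (simp add: field_simps)
      finally show False using \<open>I > 0\<close> by simp
    qed
    then show ?thesis by (simp add: I_def K_def)
  qed
  have AER: "AE x in lborel. w f0 x * indicator {- real R..real R} x = 0" for R :: nat
  proof -
    have "integrable lborel (\<lambda>x. w f0 x * indicator {- real R..real R} x)"
      by (intro integrable_real_mult_indicator int_w f0B1) auto
    moreover have "integral\<^sup>L lborel (\<lambda>x. w f0 x * indicator {- real R..real R} x) = 0"
      using stepA[of R] w_nonneg by (intro antisym integral_nonneg_AE) (auto simp: indicator_def)
    moreover have "AE x in lborel. 0 \<le> w f0 x * indicator {- real R..real R} x"
      by (intro AE_I2 mult_nonneg_nonneg w_nonneg) simp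
    ultimately show ?thesis
      using integral_nonneg_eq_0_iff_AE by blast
  qed
  then have "AE x in lborel. \<forall>R::nat. w f0 x * indicator {- real R..real R} x = 0"
    unfolding AE_all_countable using AER by blast
  then have AEw: "AE x in lborel. w f0 x = 0"
  proof (rule eventually_mono)
    fix x assume h: "\<forall>R::nat. w f0 x * indicator {- real R..real R} x = 0"
    have "x \<in> {- real (nat \<lceil>\<bar>x\<bar>\<rceil>)..real (nat \<lceil>\<bar>x\<bar>\<rceil>)}"
      by simp linarith
    then show "w f0 x = 0" using h[rule_format, of "nat \<lceil>\<bar>x\<bar>\<rceil>"] by simp
  qed
  have AEf0: "AE x in lborel. f0 x = complex_of_real (cmod (f0 x) / cmod (f x)) * f x"
    using AEw by (rule eventually_mono) (intro pw_align, simp add: w_def q_def)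
  define a where "a = L1norm f0"
  have a0: "0 \<le> a" unfolding a_def L1norm_def by (intro integral_nonneg_AE) auto
  show ?thesis
  proof (cases "a = 0")
    case True
    then have "AE x in lborel. cmod (f0 x) = 0"
      using integral_nonneg_eq_0_iff_AE[of lborel "\<lambda>x. cmod (f0 x)"] f0i
      by (simp add: a_def L1norm_def)
    then have "f0 = (\<lambda>x. 0)" by (intro cont_AE_zero[OF f0c]) simp
    then show ?thesis by (intro exI[of _ 0]) simp
  next
    case False
    then have apos: "a > 0" using a0 by simp
    define g where "g x = complex_of_real (1 / a) * f0 x" for x
    have gB1: "g \<in> B1 \<sigma>" unfolding g_def[abs_def] by (rule B1_scale[OF f0B1])
    have gm[measurable]: "g \<in> borel_measurable lborel" unfolding g_def[abs_def] by measurable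
    have gi: "integrable lborel g" using gB1 by (simp add: B1_def)
    have gx: "cmod (g x) = (1/a) * cmod (f0 x)" for x
      using apos by (simp add: g_def norm_mult norm_divide)
    have "L1norm g = (1/a) * L1norm f0" unfolding L1norm_def gx by (rule integral_mult_right_zero)
    then have g1: "L1norm g = 1" using apos by (simp add: a_def)
    have gDB1: "g \<in> DB1 \<sigma>" using gB1 g1 by (simp add: DB1_def)
    have AEg: "AE x in lborel. g x = complex_of_real (cmod (g x) / cmod (f x)) * f x"
      using AEf0
    proof (rule eventually_mono)
      fix x assume h: "f0 x = complex_of_real (cmod (f0 x) / cmod (f x)) * f x"
      have "g x = complex_of_real (1 / a) * (complex_of_real (cmod (f0 x) / cmod (f x)) * f x)"
        unfolding g_def using h by simp
      also have "\<dots> = complex_of_real (cmod (g x) / cmod (f x)) * f x"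
      proof -
        have r: "cmod (g x) / cmod (f x) = (1/a) * (cmod (f0 x) / cmod (f x))" by (simp add: gx)
        show ?thesis by (simp only: r of_real_mult mult.assoc)
      qed
      finally show "g x = complex_of_real (cmod (g x) / cmod (f x)) * f x" .
    qed
    define h where "h m x = max 0 (cmod (g x) - real (Suc m) * cmod (f x))" for m x
    have hm[measurable]: "h m \<in> borel_measurable lborel" for m unfolding h_def[abs_def] by measurable
    have hbound: "\<bar>h m x\<bar> \<le> cmod (g x)" for m x by (simp add: h_def)
    have hi: "integrable lborel (h m)" for m
      by (rule Bochner_Integration.integrable_bound[OF integrable_norm[OF gi]]) (auto simp: hbound)
    have ineq: "1 - 2 * integral\<^sup>L lborel (h m) \<le> Re (\<Phi> g)" for m
    proof -
      define t where "t = 1 / real (Suc m)"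
      have tpos: "t > 0" by (simp add: t_def)
      define u where "u x = f x + (- complex_of_real t) * g x" for x
      have uB1: "u \<in> B1 \<sigma>" unfolding u_def[abs_def] by (intro B1_add fB1 B1_scale gB1)
      have "\<Phi> u = \<Phi> f + \<Phi> (\<lambda>x. (- complex_of_real t) * g x)"
        unfolding u_def[abs_def] by (rule add\<Phi>[OF fB1 B1_scale[OF gB1]])
      also have "\<dots> = 1 - complex_of_real t * \<Phi> g"
        using scl\<Phi>[OF gB1, of "- complex_of_real t"] \<Phi>f by simp
      finally have "\<Phi> u = 1 - complex_of_real t * \<Phi> g" .
      then have "Re (\<Phi> u) = 1 - t * Re (\<Phi> g)" by simp
      moreover have "Re (\<Phi> u) \<le> L1norm u" using bnd[OF uB1] complex_Re_le_cmod[of "\<Phi> u"] by linarith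
      moreover have "L1norm u = 1 - t + 2 * t * integral\<^sup>L lborel (h m)"
      proof -
        have "AE x in lborel. cmod (u x) = cmod (f x) - t * cmod (g x) + 2 * t * h m x"
          using AEg
        proof (rule eventually_mono)
          fix x assume hx: "g x = complex_of_real (cmod (g x) / cmod (f x)) * f x"
          have "cmod (u x) = cmod (f x) - t * cmod (g x) + 2 * max 0 (t * cmod (g x) - cmod (f x))"
            unfolding u_def by (rule pw_norm[OF hx]) (use tpos in simp)
          also have "max 0 (t * cmod (g x) - cmod (f x)) = t * h m x"
          proof -
            have e: "t * cmod (g x) - cmod (f x) = t * (cmod (g x) - real (Suc m) * cmod (f x))"
              unfolding t_def by (simp add: right_diff_distrib)
            show ?thesis unfolding e h_def using tpos by (auto simp: max_def zero_le_mult_iff)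
          qed
          finally show "cmod (u x) = cmod (f x) - t * cmod (g x) + 2 * t * h m x" by simp
        qed
        then have "L1norm u = integral\<^sup>L lborel (\<lambda>x. cmod (f x) - t * cmod (g x) + 2 * t * h m x)"
          unfolding L1norm_def by (intro integral_cong_AE) (auto simp: u_def[abs_def])
        also have "\<dots> = L1norm f - t * L1norm g + 2 * t * integral\<^sup>L lborel (h m)"
          unfolding L1norm_def using fi gi hi
          by (simp add: Bochner_Integration.integral_add Bochner_Integration.integral_diff
              Bochner_Integration.integrable_diff Bochner_Integration.integrable_add)
        finally show ?thesis using f1 g1 by simp
      qed
      ultimately have "t * (1 - 2 * integral\<^sup>L lborel (h m)) \<le> t * Re (\<Phi> g)"
        by (simp add: algebra_simps)
      then show ?thesis using tpos by simp
    qed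
    have b1: "integrable lborel (\<lambda>x. cmod (g x))" using gi by simp
    have b2: "\<And>m. AE x in lborel. norm (h m x) \<le> cmod (g x)" using hbound by simp
    have b3: "AE x in lborel. (\<lambda>m. h m x) \<longlonglongrightarrow> 0"
        using AEg
      proof (rule eventually_mono)
        fix x assume hx: "g x = complex_of_real (cmod (g x) / cmod (f x)) * f x"
        show "(\<lambda>m. h m x) \<longlonglongrightarrow> 0"
        proof (cases "f x = 0")
          case True
          then have "g x = 0" using hx by simp
          then show ?thesis using True by (simp add: h_def)
        next
          case False
          obtain N :: nat where N: "cmod (g x) / cmod (f x) < real N" using reals_Archimedean2 by blast
          have "h m x = 0" if "m \<ge> N" for m
          proof -
            have "cmod (g x) < real N * cmod (f x)" using N False by (simp add: field_simps)
            also have "\<dots> \<le> real (Suc m) * cmod (f x)" using that by (intro mult_right_mono) auto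
            finally show ?thesis by (simp add: h_def)
          qed
          then show ?thesis by (intro tendsto_eventually eventually_sequentiallyI[of N]) auto
        qed
      qed
    have b0: "(\<lambda>x. 0::real) \<in> borel_measurable lborel" by simp
    have hlim: "(\<lambda>m. integral\<^sup>L lborel (h m)) \<longlonglongrightarrow> integral\<^sup>L lborel (\<lambda>x. 0::real)"
      using Bochner_Integration.integral_dominated_convergence[OF b0 hm b1 b3 b2] by simp
    then have "(\<lambda>m. 1 - 2 * integral\<^sup>L lborel (h m)) \<longlonglongrightarrow> 1"
      by (auto intro!: tendsto_eq_intros)
    then have "1 \<le> Re (\<Phi> g)" by (rule LIMSEQ_le_const2) (use ineq in auto)
    then have "g = f" using exp1[OF gDB1] by fastforce
    have "f0 = (\<lambda>x. complex_of_real a * f x)"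
    proof
      fix x
      have "f0 x = complex_of_real a * g x" using apos by (simp add: g_def)
      then show "f0 x = complex_of_real a * f x" using \<open>g = f\<close> by simp
    qed
    moreover have "a \<le> 1" using f0le by (simp add: a_def)
    ultimately show ?thesis using a0 by blast
  qed
qed

end
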